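(* Let $P$ be a finite lattice and $f\in\mathcal{L}_P$. Let $\check{\mathcal{S}}_f$ be the set of minimal elements of $\mathcal{S}_f=\{s\in\mathcal{L}_P:f+s=1\}$ and $\hat{\mathcal{W}}_f$ the set of maximal elements of $\mathcal{W}_f=\{w\in\mathcal{L}_P:w\le f,\ w\text{ prime}\}$. Then the operator $\neg$ restricts to a bijection from $\check{\mathcal{S}}_f$ onto $\hat{\mathcal{W}}_f$.
   Context: $P$ is a finite lattice with greatest element $\hat p$. $\mathcal{L}_P$ is the set of maps $f:P\to P$ satisfying (A.1) $a\le f(a)$; (A.2) $a\le b\Rightarrow f(a)\le f(b)$; (A.3) $f(f(a))=f(a)$, ordered pointwise; it is a lattice with join $+$ and greatest element $1:a\mapsto\hat p$. $\Phi f=\{a:f(a)=a\}$. $f$ is prime if $P\setminus\Phi f$ is closed under $\wedge$; for prime $f$, $\neg f$ is the (prime) element of $\mathcal{L}_P$ with $\Phi(\neg f)=(P\setminus\Phi f)\cup\{\hat p\}$. (Minimal elements of $\mathcal{S}_f$ are prime, so $\neg$ is defined on them.) *)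

theory Defs
  imports Main
begin

text \<open>P is modelled as a finite type with a bounded lattice structure; top is the
greatest element. Maps P to P are ordered pointwise (Isabelle's function order).\<close>

definition closure_ops :: "('a::{finite,bounded_lattice} \<Rightarrow> 'a) set" where
  "closure_ops = {f. (\<forall>a. a \<le> f a) \<and> (\<forall>a b. a \<le> b \<longrightarrow> f a \<le> f b) \<and> (\<forall>a. f (f a) = f a)}"

definition fixpts :: "('a \<Rightarrow> 'a) \<Rightarrow> 'a set" where
  "fixpts f = {a. f a = a}"

definition one_op :: "'a::{finite,bounded_lattice} \<Rightarrow> 'a" where
  "one_op = (\<lambda>a. top)"

definition clo_join :: "('a::{finite,bounded_lattice} \<Rightarrow> 'a) \<Rightarrow> ('a \<Rightarrow> 'a) \<Rightarrow> ('a \<Rightarrow> 'a)" where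
  "clo_join f g = (LEAST h. h \<in> closure_ops \<and> f \<le> h \<and> g \<le> h)"

definition prime_op :: "('a::{finite,bounded_lattice} \<Rightarrow> 'a) \<Rightarrow> bool" where
  "prime_op f \<longleftrightarrow> (\<forall>a b. a \<notin> fixpts f \<longrightarrow> b \<notin> fixpts f \<longrightarrow> inf a b \<notin> fixpts f)"

definition neg_op :: "('a::{finite,bounded_lattice} \<Rightarrow> 'a) \<Rightarrow> ('a \<Rightarrow> 'a)" where
  "neg_op f = (THE g. g \<in> closure_ops \<and> fixpts g = (UNIV - fixpts f) \<union> {top})"

definition S_set :: "('a::{finite,bounded_lattice} \<Rightarrow> 'a) \<Rightarrow> ('a \<Rightarrow> 'a) set" where
  "S_set f = {s \<in> closure_ops. clo_join f s = one_op}"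

definition W_set :: "('a::{finite,bounded_lattice} \<Rightarrow> 'a) \<Rightarrow> ('a \<Rightarrow> 'a) set" where
  "W_set f = {w \<in> closure_ops. w \<le> f \<and> prime_op w}"

definition minimals :: "('b::order) set \<Rightarrow> 'b set" where
  "minimals A = {x \<in> A. \<forall>y\<in>A. y \<le> x \<longrightarrow> y = x}"

definition maximals :: "('b::order) set \<Rightarrow> 'b set" where
  "maximals A = {x \<in> A. \<forall>y\<in>A. x \<le> y \<longrightarrow> y = x}"

end

theory Submission
  imports Defs
begin

definition Moore :: "('a::bounded_lattice) set \<Rightarrow> bool" where
  "Moore M \<longleftrightarrow> top \<in> M \<and> (\<forall>a b. a \<in> M \<longrightarrow> b \<in> M \<longrightarrow> inf a b \<in> M)"

definition primeset :: "('a::bounded_lattice) set \<Rightarrow> bool" where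
  "primeset N \<longleftrightarrow> (\<forall>a b. a \<notin> N \<longrightarrow> b \<notin> N \<longrightarrow> inf a b \<notin> N)"

definition mk :: "('a::{finite,bounded_lattice}) set \<Rightarrow> 'a \<Rightarrow> 'a" where
  "mk M a = Inf_fin {m \<in> M. a \<le> m}"

lemma co_props:
  assumes "f \<in> closure_ops"
  shows "a \<le> f a" "a \<le> b \<Longrightarrow> f a \<le> f b" "f (f a) = f a"
  using assms by (auto simp: closure_ops_def)

lemma fix_in: "f \<in> closure_ops \<Longrightarrow> f a \<in> fixpts f"
  by (simp add: fixpts_def co_props)

lemma Moore_fix:
  assumes "f \<in> closure_ops" shows "Moore (fixpts f)"
proof -
  have "f top = top" using co_props(1)[OF assms, of top] by (simp add: top_unique)
  moreover have "f (inf a b) = inf a b" if "f a = a" "f b = b" for a b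
  proof -
    have "f (inf a b) \<le> f a" "f (inf a b) \<le> f b" using co_props(2)[OF assms] by auto
    hence "f (inf a b) \<le> inf a b" using that by simp
    thus ?thesis using co_props(1)[OF assms, of "inf a b"] by (simp add: antisym)
  qed
  ultimately show ?thesis by (auto simp: Moore_def fixpts_def)
qed

lemma le_iff:
  assumes "f \<in> closure_ops" "g \<in> closure_ops"
  shows "f \<le> g \<longleftrightarrow> fixpts g \<subseteq> fixpts f"
proof
  assume "f \<le> g"
  show "fixpts g \<subseteq> fixpts f"
  proof
    fix a assume "a \<in> fixpts g"
    hence ga: "g a = a" by (simp add: fixpts_def)
    have "f a \<le> g a" using \<open>f \<le> g\<close> by (rule le_funD)
    hence "f a \<le> a" using ga by simp
    thus "a \<in> fixpts f" using co_props(1)[OF assms(1), of a] by (simp add: fixpts_def antisym)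
  qed
next
  assume H: "fixpts g \<subseteq> fixpts f"
  show "f \<le> g" unfolding le_fun_def
  proof
    fix a
    have "f (g a) = g a" using H fix_in[OF assms(2), of a] by (auto simp: fixpts_def)
    moreover have "f a \<le> f (g a)" by (rule co_props(2)[OF assms(1) co_props(1)[OF assms(2)]])
    ultimately show "f a \<le> g a" by simp
  qed
qed

lemma co_eq:
  assumes "f \<in> closure_ops" "g \<in> closure_ops" "fixpts f = fixpts g"
  shows "f = g"
  using le_iff[OF assms(1,2)] le_iff[OF assms(2,1)] assms(3) by (simp add: antisym)

lemma Inf_fin_in:
  assumes "finite A" "A \<noteq> {}" "A \<subseteq> M" "Moore M"
  shows "Inf_fin A \<in> M"
  using assms
proof (induction A rule: finite_ne_induct)
  case (singleton x) thus ?case by simp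
next
  case (insert x F)
  have "Inf_fin F \<in> M" using insert by simp
  moreover have "x \<in> M" using insert by simp
  moreover have "Inf_fin (insert x F) = inf x (Inf_fin F)" using insert by (simp add: Inf_fin.insert)
  ultimately show ?case using insert(6) unfolding Moore_def by simp
qed

lemma mk_props:
  fixes M :: "'a::{finite,bounded_lattice} set"
  assumes "Moore M"
  shows "mk M \<in> closure_ops" "fixpts (mk M) = M"
proof -
  have top: "top \<in> M" using assms by (simp add: Moore_def)
  have ne: "{m \<in> M. a \<le> m} \<noteq> {}" for a using top by auto
  have inM: "mk M a \<in> M" for a unfolding mk_def
    by (rule Inf_fin_in[OF _ ne _ assms]) auto
  have up: "a \<le> mk M a" for a unfolding mk_def
    by (rule Inf_fin.boundedI[OF _ ne]) auto
  have lb: "m \<in> M \<Longrightarrow> a \<le> m \<Longrightarrow> mk M a \<le> m" for a m unfolding mk_def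
    by (rule Inf_fin.coboundedI) auto
  have fixM: "m \<in> M \<Longrightarrow> mk M m = m" for m using lb[of m m] up[of m] by (intro antisym) simp_all
  have mono: "mk M a \<le> mk M b" if "a \<le> b" for a b
  proof -
    have "a \<le> mk M b" using that up[of b] by (rule order_trans)
    thus ?thesis by (rule lb[OF inM[of b]])
  qed
  show "mk M \<in> closure_ops" unfolding closure_ops_def
  proof (intro CollectI conjI allI impI)
    fix a b
    show "a \<le> mk M a" by (rule up)
    show "a \<le> b \<Longrightarrow> mk M a \<le> mk M b" by (rule mono)
    show "mk M (mk M a) = mk M a" by (rule fixM[OF inM])
  qed
  show "fixpts (mk M) = M"
  proof (rule set_eqI)
    fix x show "x \<in> fixpts (mk M) \<longleftrightarrow> x \<in> M"
    proof
      assume "x \<in> fixpts (mk M)"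
      hence "mk M x = x" by (simp add: fixpts_def)
      thus "x \<in> M" using inM[of x] by simp
    next
      assume "x \<in> M"
      thus "x \<in> fixpts (mk M)" using fixM[of x] by (simp add: fixpts_def)
    qed
  qed
qed

lemma prime_Moore:
  fixes N :: "'a::bounded_lattice set"
  assumes "primeset N" shows "Moore ((UNIV - N) \<union> {top})"
  using assms unfolding Moore_def primeset_def by auto

lemma neg_eq:
  fixes g :: "'a::{finite,bounded_lattice} \<Rightarrow> 'a"
  assumes "g \<in> closure_ops" "primeset (fixpts g)"
  shows "neg_op g \<in> closure_ops" "fixpts (neg_op g) = (UNIV - fixpts g) \<union> {top}"
proof -
  let ?K = "(UNIV - fixpts g) \<union> {top}"
  have M: "Moore ?K" using prime_Moore[OF assms(2)] .
  have "neg_op g = mk ?K" unfolding neg_op_def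
  proof (rule the_equality)
    show "mk ?K \<in> closure_ops \<and> fixpts (mk ?K) = ?K" using mk_props[OF M] by simp
    fix h assume "h \<in> closure_ops \<and> fixpts h = ?K"
    thus "h = mk ?K" using co_eq mk_props[OF M] by metis
  qed
  thus "neg_op g \<in> closure_ops" "fixpts (neg_op g) = ?K" using mk_props[OF M] by auto
qed

lemma one_op_co: "one_op \<in> closure_ops" "fixpts one_op = {top}"
  by (auto simp: closure_ops_def one_op_def fixpts_def)

lemma S_char:
  fixes f :: "'a::{finite,bounded_lattice} \<Rightarrow> 'a"
  assumes f: "f \<in> closure_ops" and s: "s \<in> closure_ops"
  shows "clo_join f s = one_op \<longleftrightarrow> fixpts f \<inter> fixpts s = {top}"
proof -
  have MF: "Moore (fixpts f)" "Moore (fixpts s)" using Moore_fix f s by auto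
  have M: "Moore (fixpts f \<inter> fixpts s)" using MF unfolding Moore_def by auto
  let ?h = "mk (fixpts f \<inter> fixpts s)"
  note hp = mk_props[OF M]
  have "clo_join f s = ?h" unfolding clo_join_def
  proof (rule Least_equality)
    show "?h \<in> closure_ops \<and> f \<le> ?h \<and> s \<le> ?h" using hp le_iff f s by auto
    fix y assume "y \<in> closure_ops \<and> f \<le> y \<and> s \<le> y"
    thus "?h \<le> y" using hp le_iff f s by (metis le_inf_iff)
  qed
  moreover have "?h = one_op \<longleftrightarrow> fixpts f \<inter> fixpts s = {top}"
    using hp one_op_co co_eq by metis
  ultimately show ?thesis by simp
qed

definition disj :: "('a::bounded_lattice) set \<Rightarrow> 'a set \<Rightarrow> bool" where
  "disj F N \<longleftrightarrow> (\<forall>x. x \<in> F \<longrightarrow> x \<in> N \<longrightarrow> x = top)"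

lemma S_set_char:
  assumes f: "f \<in> closure_ops"
  shows "s \<in> S_set f \<longleftrightarrow> s \<in> closure_ops \<and> disj (fixpts f) (fixpts s)"
proof -
  have "s \<in> closure_ops \<Longrightarrow> fixpts f \<inter> fixpts s = {top} \<longleftrightarrow> disj (fixpts f) (fixpts s)"
    using Moore_fix[OF f] Moore_fix[of s] unfolding disj_def Moore_def by auto
  thus ?thesis using S_char[OF f] unfolding S_set_def by auto
qed

lemma minS_char:
  assumes f: "f \<in> closure_ops"
  shows "s \<in> minimals (S_set f) \<longleftrightarrow> s \<in> closure_ops \<and> disj (fixpts f) (fixpts s) \<and>
     (\<forall>N. Moore N \<longrightarrow> fixpts s \<subseteq> N \<longrightarrow> disj (fixpts f) N \<longrightarrow> N = fixpts s)"
proof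
  assume H: "s \<in> minimals (S_set f)"
  hence s: "s \<in> closure_ops" "disj (fixpts f) (fixpts s)" using S_set_char[OF f] by (auto simp: minimals_def)
  moreover have "N = fixpts s" if "Moore N" "fixpts s \<subseteq> N" "disj (fixpts f) N" for N
  proof -
    note hp = mk_props[OF that(1)]
    have "mk N \<in> S_set f" using S_set_char[OF f] hp that by auto
    moreover have "mk N \<le> s" using le_iff[OF hp(1) s(1)] hp that by auto
    ultimately have "mk N = s" using H by (auto simp: minimals_def)
    thus ?thesis using hp by auto
  qed
  ultimately show "s \<in> closure_ops \<and> disj (fixpts f) (fixpts s) \<and>
     (\<forall>N. Moore N \<longrightarrow> fixpts s \<subseteq> N \<longrightarrow> disj (fixpts f) N \<longrightarrow> N = fixpts s)" by blast
next
  assume H: "s \<in> closure_ops \<and> disj (fixpts f) (fixpts s) \<and>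
     (\<forall>N. Moore N \<longrightarrow> fixpts s \<subseteq> N \<longrightarrow> disj (fixpts f) N \<longrightarrow> N = fixpts s)"
  show "s \<in> minimals (S_set f)" unfolding minimals_def
  proof (intro CollectI conjI ballI impI)
    show "s \<in> S_set f" using H S_set_char[OF f] by auto
    fix y assume "y \<in> S_set f" "y \<le> s"
    hence y: "y \<in> closure_ops" "disj (fixpts f) (fixpts y)" using S_set_char[OF f] by auto
    have "fixpts s \<subseteq> fixpts y" using le_iff[OF y(1)] H \<open>y \<le> s\<close> by auto
    hence "fixpts y = fixpts s" using H y Moore_fix by blast
    thus "y = s" using co_eq y H by blast
  qed
qed

lemma prime_op_iff: "prime_op w \<longleftrightarrow> primeset (fixpts w)"
  by (simp add: prime_op_def primeset_def)

lemma W_set_char: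
  assumes f: "f \<in> closure_ops"
  shows "w \<in> W_set f \<longleftrightarrow> w \<in> closure_ops \<and> fixpts f \<subseteq> fixpts w \<and> primeset (fixpts w)"
  using le_iff[OF _ f] by (auto simp: W_set_def prime_op_iff)

lemma prime_min:
  assumes f: "f \<in> closure_ops" and s: "s \<in> minimals (S_set f)"
  shows "primeset (fixpts s)"
proof -
  let ?M = "fixpts s" and ?F = "fixpts f"
  have sc: "s \<in> closure_ops" "disj ?F ?M"
    and mx: "\<And>N. Moore N \<Longrightarrow> ?M \<subseteq> N \<Longrightarrow> disj ?F N \<Longrightarrow> N = ?M"
    using minS_char[OF f] s by auto
  have MM: "Moore ?M" using Moore_fix sc by auto
  have MF: "Moore ?F" using Moore_fix f by auto
  have ext: "\<exists>m. m \<in> ?M \<and> inf a m \<in> ?F \<and> inf a m \<noteq> top" if "a \<notin> ?M" for a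
  proof -
    let ?N = "?M \<union> {inf a m | m. m \<in> ?M}"
    have "Moore ?N" unfolding Moore_def
    proof (intro conjI allI impI)
      show "top \<in> ?N" using MM by (simp add: Moore_def)
      fix x y assume xy: "x \<in> ?N" "y \<in> ?N"
      have cl: "u \<in> ?M \<Longrightarrow> v \<in> ?M \<Longrightarrow> inf u v \<in> ?M" for u v using MM by (simp add: Moore_def)
      from xy consider (1) "x \<in> ?M" "y \<in> ?M"
        | (2) m where "x \<in> ?M" "y = inf a m" "m \<in> ?M"
        | (3) m where "x = inf a m" "m \<in> ?M" "y \<in> ?M"
        | (4) m m' where "x = inf a m" "m \<in> ?M" "y = inf a m'" "m' \<in> ?M" by blast
      thus "inf x y \<in> ?N"
      proof cases
        case 1 thus ?thesis using cl by blast
      next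
        case (2 m)
        have "inf x y = inf a (inf x m)" using 2 by (simp add: inf_aci)
        thus ?thesis using cl 2 by blast
      next
        case (3 m)
        have "inf x y = inf a (inf m y)" using 3 by (simp add: inf_aci)
        thus ?thesis using cl 3 by blast
      next
        case (4 m m')
        have "inf x y = inf a (inf m m')" using 4 by (simp add: inf_aci)
        thus ?thesis using cl 4 by blast
      qed
    qed
    note NM = this
    have topM: "top \<in> ?M" using MM by (simp add: Moore_def)
    have "inf a top \<in> {inf a m | m. m \<in> ?M}" using topM by blast
    hence aN: "a \<in> ?N" by simp
    have NneM: "?N \<noteq> ?M"
    proof
      assume "?N = ?M"
      with aN that show False by simp
    qed
    have "\<not> disj ?F ?N"
    proof
      assume "disj ?F ?N"
      hence "?N = ?M" using mx[OF NM] by simp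
      with NneM show False by simp
    qed
    then obtain x where x: "x \<in> ?F" "x \<in> ?N" "x \<noteq> top" unfolding disj_def by blast
    have "x \<notin> ?M" using sc(2) x unfolding disj_def by blast
    hence "x \<in> {inf a m | m. m \<in> ?M}" using x(2) by simp
    then obtain m where "x = inf a m" "m \<in> ?M" by blast
    thus ?thesis using x by blast
  qed
  show ?thesis unfolding primeset_def
  proof (intro allI impI notI)
    fix a b assume a: "a \<notin> ?M" and b: "b \<notin> ?M" and ab: "inf a b \<in> ?M"
    obtain m where m: "m \<in> ?M" "inf a m \<in> ?F" "inf a m \<noteq> top" using ext[OF a] by blast
    obtain m' where m': "m' \<in> ?M" "inf b m' \<in> ?F" using ext[OF b] by blast
    have "inf (inf a m) (inf b m') = inf (inf a b) (inf m m')" by (simp add: inf_aci)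
    hence "inf (inf a m) (inf b m') \<in> ?M" using MM ab m m' by (simp add: Moore_def)
    moreover have "inf (inf a m) (inf b m') \<in> ?F" using MF m m' by (simp add: Moore_def)
    ultimately have "inf (inf a m) (inf b m') = top" using sc(2) unfolding disj_def by blast
    hence "inf a m = top" by simp
    thus False using m by simp
  qed
qed

lemma topfix: "f \<in> closure_ops \<Longrightarrow> top \<in> fixpts f"
  using Moore_fix[of f] unfolding Moore_def by blast

theorem mainTheorem15:
  fixes f :: "'a::{finite,bounded_lattice} \<Rightarrow> 'a"
  assumes "f \<in> closure_ops"
  shows "bij_betw neg_op (minimals (S_set f)) (maximals (W_set f))"
proof -
  have f: "f \<in> closure_ops" using assms .
  let ?F = "fixpts f"
  have MF: "Moore ?F" using Moore_fix f by auto
  have into: "neg_op s \<in> maximals (W_set f)" if s: "s \<in> minimals (S_set f)" for s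
  proof -
    let ?M = "fixpts s"
    have sc: "s \<in> closure_ops" "disj ?F ?M"
      and mx: "\<And>N. Moore N \<Longrightarrow> ?M \<subseteq> N \<Longrightarrow> disj ?F N \<Longrightarrow> N = ?M"
      using minS_char[OF f] s by auto
    have pr: "primeset ?M" using prime_min[OF f s] .
    note ng = neg_eq[OF sc(1) pr]
    have MM: "Moore ?M" using Moore_fix sc by auto
    have w1: "?F \<subseteq> fixpts (neg_op s)" using ng sc(2) unfolding disj_def by auto
    have w2: "primeset (fixpts (neg_op s))" unfolding ng primeset_def
    proof (intro allI impI)
      fix a b assume a: "a \<notin> UNIV - ?M \<union> {top}" and b: "b \<notin> UNIV - ?M \<union> {top}"
      hence "inf a b \<in> ?M" using MM by (simp add: Moore_def)
      moreover have "inf a b \<noteq> top" using a by (metis UnI2 inf_eq_top_iff singletonI)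
      ultimately show "inf a b \<notin> UNIV - ?M \<union> {top}" by simp
    qed
    have wW: "neg_op s \<in> W_set f" using W_set_char[OF f] ng w1 w2 by auto
    show ?thesis unfolding maximals_def
    proof (intro CollectI conjI ballI impI)
      show "neg_op s \<in> W_set f" by (rule wW)
      fix w' assume w'W: "w' \<in> W_set f" and le: "neg_op s \<le> w'"
      let ?N = "fixpts w'"
      have w': "w' \<in> closure_ops" "?F \<subseteq> ?N" "primeset ?N" using W_set_char[OF f] w'W by auto
      have sub: "?N \<subseteq> fixpts (neg_op s)" using le le_iff[OF ng(1) w'(1)] by auto
      have topN: "top \<in> ?N" using topfix[OF w'(1)] .
      let ?K = "(UNIV - ?N) \<union> {top}"
      have "Moore ?K" using prime_Moore[OF w'(3)] .
      moreover have "?M \<subseteq> ?K" using sub ng(2) by auto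
      moreover have "disj ?F ?K" using w'(2) unfolding disj_def by auto
      ultimately have K: "?K = ?M" by (rule mx)
      have "?N = fixpts (neg_op s)"
      proof
        show "?N \<subseteq> fixpts (neg_op s)" by (rule sub)
        show "fixpts (neg_op s) \<subseteq> ?N"
        proof
          fix x assume "x \<in> fixpts (neg_op s)"
          hence "x \<notin> ?M \<or> x = top" using ng(2) by auto
          thus "x \<in> ?N" using K topN by auto
        qed
      qed
      thus "w' = neg_op s" using co_eq[OF w'(1) ng(1)] by simp
    qed
  qed
  have inj: "inj_on neg_op (minimals (S_set f))"
  proof (rule inj_onI)
    fix s1 s2 assume s1: "s1 \<in> minimals (S_set f)" and s2: "s2 \<in> minimals (S_set f)"
      and eq: "neg_op s1 = neg_op s2"
    have c1: "s1 \<in> closure_ops" and c2: "s2 \<in> closure_ops" using minS_char[OF f] s1 s2 by auto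
    have "fixpts (neg_op s1) = fixpts (neg_op s2)" using eq by simp
    hence "UNIV - fixpts s1 \<union> {top} = UNIV - fixpts s2 \<union> {top}"
      using neg_eq[OF c1 prime_min[OF f s1]] neg_eq[OF c2 prime_min[OF f s2]] by simp
    note eqset = this
    have "fixpts s1 = fixpts s2"
    proof (rule set_eqI)
      fix x
      have "x \<in> UNIV - fixpts s1 \<union> {top} \<longleftrightarrow> x \<in> UNIV - fixpts s2 \<union> {top}" using eqset by simp
      thus "x \<in> fixpts s1 \<longleftrightarrow> x \<in> fixpts s2" using topfix[OF c1] topfix[OF c2]
        by (cases "x = top") auto
    qed
    thus "s1 = s2" using co_eq[OF c1 c2] by simp
  qed
  have onto: "w \<in> neg_op ` minimals (S_set f)" if w: "w \<in> maximals (W_set f)" for w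
  proof -
    have wW: "w \<in> W_set f" and wmx: "\<And>y. y \<in> W_set f \<Longrightarrow> w \<le> y \<Longrightarrow> y = w"
      using w by (auto simp: maximals_def)
    have wc: "w \<in> closure_ops" "?F \<subseteq> fixpts w" "primeset (fixpts w)" using W_set_char[OF f] wW by auto
    have topw: "top \<in> fixpts w" using topfix[OF wc(1)] .
    let ?M = "(UNIV - fixpts w) \<union> {top}"
    have MM: "Moore ?M" using prime_Moore[OF wc(3)] .
    note sp = mk_props[OF MM]
    let ?s = "mk ?M"
    have disjM: "disj ?F ?M" using wc(2) unfolding disj_def by auto
    have sS: "?s \<in> S_set f" using S_set_char[OF f] sp disjM by auto
    have smin: "?s \<in> minimals (S_set f)" unfolding minS_char[OF f] sp(2)
    proof (intro conjI allI impI)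
      show "?s \<in> closure_ops" by (rule sp(1))
      show "disj ?F ?M" by (rule disjM)
      fix N assume N: "Moore N" "?M \<subseteq> N" "disj ?F N"
      note np = mk_props[OF N(1)]
      have "mk N \<in> S_set f" using S_set_char[OF f] np N by auto
      moreover have "finite (S_set f)" by simp
      ultimately obtain m where m: "m \<in> S_set f" "m \<le> mk N" "\<forall>b\<in>S_set f. b \<le> m \<longrightarrow> m = b"
        using finite_has_minimal2[of "S_set f" "mk N"] by blast
      have "m \<in> minimals (S_set f)" unfolding minimals_def using m by force
      then obtain s'' where s'': "s'' \<in> minimals (S_set f)" "s'' \<le> mk N" using m(2) by blast
      have c'': "s'' \<in> closure_ops" using minS_char[OF f] s'' by auto
      have Ns: "N \<subseteq> fixpts s''" using le_iff[OF c'' np(1)] s''(2) np by auto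
      have w''max: "neg_op s'' \<in> maximals (W_set f)" using into[OF s''(1)] .
      note ng = neg_eq[OF c'' prime_min[OF f s''(1)]]
      have "fixpts (neg_op s'') \<subseteq> fixpts w"
      proof
        fix x assume "x \<in> fixpts (neg_op s'')"
        hence "x \<notin> fixpts s'' \<or> x = top" using ng by auto
        thus "x \<in> fixpts w" using Ns N(2) topw by auto
      qed
      hence "w \<le> neg_op s''" using le_iff[OF wc(1) ng(1)] by simp
      hence eqw: "neg_op s'' = w" using wmx w''max by (auto simp: maximals_def)
      show "N = ?M"
      proof
        show "?M \<subseteq> N" by (rule N(2))
        show "N \<subseteq> ?M"
        proof
          fix n assume "n \<in> N"
          hence "n \<in> fixpts s''" using Ns by auto
          hence "n = top \<or> n \<notin> fixpts (neg_op s'')" using ng by auto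
          thus "n \<in> ?M" using eqw by auto
        qed
      qed
    qed
    have "primeset (fixpts ?s)" using prime_min[OF f smin] .
    note ng = neg_eq[OF sp(1) this]
    have "fixpts (neg_op ?s) = fixpts w" using ng(2) sp(2) topw by auto
    hence "neg_op ?s = w" using co_eq[OF ng(1) wc(1)] by simp
    thus ?thesis using smin by (metis image_eqI)
  qed
  show ?thesis unfolding bij_betw_def
  proof (intro conjI inj equalityI)
    show "neg_op ` minimals (S_set f) \<subseteq> maximals (W_set f)" using into by (rule image_subsetI)
    show "maximals (W_set f) \<subseteq> neg_op ` minimals (S_set f)" using onto by (rule subsetI)
  qed
qed

end
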